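(* Let $n\ge q\ge 2$ be integers and put $S_1=\sqrt{q^2+4(q-1)(n-2)}$. Let $d$ be an integer and define $j$ by $d=n-1-\frac{n-2+j}{q}$ (so $j=q(n-1-d)-n+2$), and assume $j\in\left[0,\frac{S_1-q}{2}\right)$. Put $s=1-\frac{2d}{n}$, $d_0=n-\frac{j(n-1)}{q(j+q-1)}$, let $e$ be the unique rational number in $(0,1]$ such that $d_0+e$ is an integer, and set $$a=\frac{(n-1)(q-1)(q+j)}{q+j-1}+eq,\quad D=(j+q-1)[2n(q-1)-q]+q,\quad E=-n(n-1)(q-1)^2(j+q).$$ Then $$A_q(n,s)\le \frac{a(a+q)dq}{a^2(2-q-j)+Da+E}.$$
   Context: $H(n,q)$ is the set of words of length $n$ over the alphabet $\{0,1,\dots,q-1\}$ with Hamming distance $d(x,y)$; the inner product is $\langle x,y\rangle=1-\frac{2d(x,y)}{n}$. For $s\in[-1,1)$, $A_q(n,s)$ is the maximum cardinality of a code $C\subset H(n,q)$ with $\langle x,y\rangle\le s$ for all distinct $x,y\in C$ (equivalently, minimum distance at least $n(1-s)/2$). *)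

theory Defs
  imports Complex_Main
begin

definition hamming_space :: "nat \<Rightarrow> nat \<Rightarrow> nat list set" where
  "hamming_space n q = {x. length x = n \<and> (\<forall>a\<in>set x. a < q)}"

definition hamming_dist :: "nat list \<Rightarrow> nat list \<Rightarrow> nat" where
  "hamming_dist x y = card {i. i < length x \<and> x ! i \<noteq> y ! i}"

definition ham_inner :: "nat \<Rightarrow> nat list \<Rightarrow> nat list \<Rightarrow> real" where
  "ham_inner n x y = 1 - 2 * real (hamming_dist x y) / real n"

definition is_code :: "nat \<Rightarrow> nat \<Rightarrow> real \<Rightarrow> nat list set \<Rightarrow> bool" where
  "is_code q n s C \<longleftrightarrow> C \<subseteq> hamming_space n q \<and>
     (\<forall>x\<in>C. \<forall>y\<in>C. x \<noteq> y \<longrightarrow> ham_inner n x y \<le> s)"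

definition A_code :: "nat \<Rightarrow> nat \<Rightarrow> real \<Rightarrow> nat" where
  "A_code q n s = Max {card C | C. is_code q n s C}"

end

theory Submission
  imports Defs
begin


lemma swap_nonneg:
  fixes G :: "'i \<Rightarrow> 'x \<Rightarrow> 'x \<Rightarrow> real"
  assumes "finite C" "finite I" "\<And>i. i \<in> I \<Longrightarrow> 0 \<le> (\<Sum>x\<in>C. \<Sum>y\<in>C. G i x y)"
  shows "0 \<le> (\<Sum>x\<in>C. \<Sum>y\<in>C. \<Sum>i\<in>I. G i x y)"
proof -
  have "(\<Sum>x\<in>C. \<Sum>y\<in>C. \<Sum>i\<in>I. G i x y) = (\<Sum>x\<in>C. \<Sum>i\<in>I. \<Sum>y\<in>C. G i x y)"
    by (rule sum.cong[OF refl], rule sum.swap)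
  also have "\<dots> = (\<Sum>i\<in>I. \<Sum>x\<in>C. \<Sum>y\<in>C. G i x y)" by (rule sum.swap)
  also have "\<dots> \<ge> 0" using assms(3) by (simp add: sum_nonneg)
  finally show ?thesis .
qed

lemma gram_nonneg:
  fixes phi :: "'x \<Rightarrow> 't \<Rightarrow> real"
  assumes "finite C" "finite T"
  shows "0 \<le> (\<Sum>x\<in>C. \<Sum>y\<in>C. \<Sum>t\<in>T. phi x t * phi y t)"
proof (rule swap_nonneg[OF assms])
  fix t
  have "(\<Sum>x\<in>C. \<Sum>y\<in>C. phi x t * phi y t) = (\<Sum>x\<in>C. phi x t) * (\<Sum>y\<in>C. phi y t)"
    by (simp add: sum_product)
  also have "\<dots> \<ge> 0" by simp
  finally show "0 \<le> (\<Sum>x\<in>C. \<Sum>y\<in>C. phi x t * phi y t)" .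
qed

definition cc :: "nat \<Rightarrow> nat \<Rightarrow> nat list \<Rightarrow> nat list \<Rightarrow> real" where
  "cc q i x y = of_bool (x!i = y!i) - 1 / real q"

definition wv :: "nat \<Rightarrow> nat list \<Rightarrow> nat \<Rightarrow> nat \<Rightarrow> real" where
  "wv q x i a = of_bool (x!i = a) - 1 / real q"

lemma sum_ind_mult:
  fixes b q :: nat
  assumes "b < q"
  shows "(\<Sum>a<q. of_bool (b = a) * g a) = (g b :: real)"
proof -
  have "(\<Sum>a<q. of_bool (b = a) * g a) = (\<Sum>a<q. if b = a then g a else 0)"
    by (rule sum.cong) auto
  also have "\<dots> = g b" using assms by (subst sum.delta'[of "{..<q}" b g]) auto
  finally show ?thesis .
qed

lemma wv_sum0:
  assumes "x!i < q"
  shows "(\<Sum>a<q. wv q x i a) = 0"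
proof -
  have "(\<Sum>a<q. wv q x i a) = (\<Sum>a<q. of_bool (x!i = a) * 1) - real q * (1 / real q)"
    by (simp add: wv_def sum_subtractf del: sum_mult_of_bool_eq sum_of_bool_eq)
  also have "\<dots> = 0" using assms by (subst sum_ind_mult) auto
  finally show ?thesis .
qed

lemma cc_rep:
  assumes "x!i < q" "y!i < q"
  shows "cc q i x y = (\<Sum>a<q. wv q x i a * wv q y i a)"
proof -
  have "(\<Sum>a<q. wv q x i a * wv q y i a) =
     (\<Sum>a<q. of_bool (x!i = a) * wv q y i a) - (1/real q) * (\<Sum>a<q. wv q y i a)"
    by (simp add: wv_def[of q x] algebra_simps sum_subtractf sum_distrib_left
         del: sum_mult_of_bool_eq sum_of_bool_eq sum_of_bool_mult_eq)
  also have "\<dots> = wv q y i (x!i)" using assms by (simp add: sum_ind_mult wv_sum0)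
  finally show ?thesis by (simp add: cc_def wv_def eq_commute)
qed

lemma square_sum_nonneg:
  fixes phi :: "'x \<Rightarrow> real"
  assumes "finite C"
  shows "0 \<le> (\<Sum>x\<in>C. \<Sum>y\<in>C. phi x * phi y)"
proof -
  have "(\<Sum>x\<in>C. \<Sum>y\<in>C. phi x * phi y) = (\<Sum>x\<in>C. phi x) * (\<Sum>y\<in>C. phi y)"
    by (simp add: sum_product)
  also have "\<dots> \<ge> 0" by simp
  finally show ?thesis .
qed

lemma cc_triple_psd:
  assumes C: "finite C" and H: "\<And>x. x \<in> C \<Longrightarrow> x!i < q \<and> x!k < q \<and> x!l < q"
  shows "0 \<le> (\<Sum>x\<in>C. \<Sum>y\<in>C. cc q i x y * cc q k x y * cc q l x y)"
proof -
  have "(\<Sum>x\<in>C. \<Sum>y\<in>C. cc q i x y * cc q k x y * cc q l x y) =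
    (\<Sum>x\<in>C. \<Sum>y\<in>C. \<Sum>b<q. \<Sum>a<q. \<Sum>c<q.
        (wv q x i a * wv q x k b * wv q x l c) * (wv q y i a * wv q y k b * wv q y l c))"
  proof (intro sum.cong refl)
    fix x y assume "x \<in> C" "y \<in> C"
    with H show "cc q i x y * cc q k x y * cc q l x y = (\<Sum>b<q. \<Sum>a<q. \<Sum>c<q.
        (wv q x i a * wv q x k b * wv q x l c) * (wv q y i a * wv q y k b * wv q y l c))"
      by (simp add: cc_rep sum_distrib_left sum_distrib_right mult_ac)
  qed
  also have "\<dots> \<ge> 0"
    by (intro swap_nonneg C finite_lessThan square_sum_nonneg)
  finally show ?thesis .
qed

lemma cc_pair_psd:
  assumes C: "finite C" and H: "\<And>x. x \<in> C \<Longrightarrow> x!i < q \<and> x!k < q"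
  shows "0 \<le> (\<Sum>x\<in>C. \<Sum>y\<in>C. cc q i x y * cc q k x y)"
proof -
  have "(\<Sum>x\<in>C. \<Sum>y\<in>C. cc q i x y * cc q k x y) =
    (\<Sum>x\<in>C. \<Sum>y\<in>C. \<Sum>b<q. \<Sum>a<q.
        (wv q x i a * wv q x k b) * (wv q y i a * wv q y k b))"
  proof (intro sum.cong refl)
    fix x y assume "x \<in> C" "y \<in> C"
    with H show "cc q i x y * cc q k x y = (\<Sum>b<q. \<Sum>a<q.
        (wv q x i a * wv q x k b) * (wv q y i a * wv q y k b))"
      by (simp add: cc_rep sum_distrib_left sum_distrib_right mult_ac)
  qed
  also have "\<dots> \<ge> 0"
    by (intro swap_nonneg C finite_lessThan square_sum_nonneg)
  finally show ?thesis .
qed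

lemma cc_single_psd:
  assumes C: "finite C" and H: "\<And>x. x \<in> C \<Longrightarrow> x!i < q"
  shows "0 \<le> (\<Sum>x\<in>C. \<Sum>y\<in>C. cc q i x y)"
proof -
  have "(\<Sum>x\<in>C. \<Sum>y\<in>C. cc q i x y) =
    (\<Sum>x\<in>C. \<Sum>y\<in>C. \<Sum>a<q. wv q x i a * wv q y i a)"
  proof (intro sum.cong refl)
    fix x y assume "x \<in> C" "y \<in> C"
    with H show "cc q i x y = (\<Sum>a<q. wv q x i a * wv q y i a)"
      by (simp add: cc_rep)
  qed
  also have "\<dots> \<ge> 0"
    by (intro swap_nonneg C finite_lessThan square_sum_nonneg)
  finally show ?thesis .
qed

lemma e2_id:
  fixes c :: "'i \<Rightarrow> real"
  assumes "finite I"
  shows "(\<Sum>i\<in>I. \<Sum>k\<in>I-{i}. c i * c k) = (\<Sum>i\<in>I. c i)^2 - (\<Sum>i\<in>I. c i^2)"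
proof -
  have "(\<Sum>i\<in>I. \<Sum>k\<in>I-{i}. c i * c k) = (\<Sum>i\<in>I. c i * ((\<Sum>k\<in>I. c k) - c i))"
    using assms by (intro sum.cong refl) (simp add: sum_distrib_left[symmetric] sum_diff1)
  also have "\<dots> = (\<Sum>i\<in>I. c i)^2 - (\<Sum>i\<in>I. c i^2)"
    by (simp add: algebra_simps sum_subtractf sum_distrib_right[symmetric] power2_eq_square)
  finally show ?thesis .
qed

lemma e3_id:
  fixes c :: "'i \<Rightarrow> real"
  assumes "finite I"
  shows "(\<Sum>i\<in>I. \<Sum>k\<in>I-{i}. \<Sum>l\<in>I-{i}-{k}. c i * c k * c l) =
     (\<Sum>i\<in>I. c i)^3 - 3 * (\<Sum>i\<in>I. c i) * (\<Sum>i\<in>I. c i^2) + 2 * (\<Sum>i\<in>I. c i^3)"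
proof -
  define S where "S = (\<Sum>i\<in>I. c i)"
  define S2 where "S2 = (\<Sum>i\<in>I. c i^2)"
  define S3 where "S3 = (\<Sum>i\<in>I. c i^3)"
  have "(\<Sum>i\<in>I. \<Sum>k\<in>I-{i}. \<Sum>l\<in>I-{i}-{k}. c i * c k * c l) =
        (\<Sum>i\<in>I. c i * ((S - c i)^2 - (S2 - c i^2)))"
  proof (rule sum.cong[OF refl])
    fix i assume i: "i \<in> I"
    have "(\<Sum>k\<in>I-{i}. \<Sum>l\<in>I-{i}-{k}. c i * c k * c l) = (\<Sum>k\<in>I-{i}. c i * c k * ((S - c i) - c k))"
    proof (rule sum.cong[OF refl])
      fix k assume k: "k \<in> I - {i}"
      have "(\<Sum>l\<in>I-{i}-{k}. c l) = (S - c i) - c k"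
        using assms i k by (simp add: sum_diff1 S_def)
      then show "(\<Sum>l\<in>I-{i}-{k}. c i * c k * c l) = c i * c k * ((S - c i) - c k)"
        by (simp add: sum_distrib_left[symmetric])
    qed
    also have "\<dots> = c i * ((S - c i) * (\<Sum>k\<in>I-{i}. c k) - (\<Sum>k\<in>I-{i}. c k^2))"
      by (simp add: algebra_simps sum_subtractf sum_distrib_left sum_distrib_right power2_eq_square sum.distrib)
    also have "(\<Sum>k\<in>I-{i}. c k) = S - c i" using assms i by (simp add: sum_diff1 S_def)
    also have "(\<Sum>k\<in>I-{i}. c k^2) = S2 - c i^2" using assms i by (simp add: sum_diff1 S2_def)
    finally show "(\<Sum>k\<in>I-{i}. \<Sum>l\<in>I-{i}-{k}. c i * c k * c l) = c i * ((S - c i)^2 - (S2 - c i^2))"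
      by (simp add: power2_eq_square)
  qed
  also have "\<dots> = (\<Sum>i\<in>I. S^2 * c i - 2 * S * c i^2 + 2 * c i^3 - S2 * c i)"
    by (rule sum.cong[OF refl]) (simp add: algebra_simps power2_eq_square power3_eq_cube)
  also have "\<dots> = S^2 * S - 2 * S * S2 + 2 * S3 - S2 * S"
    by (simp add: sum.distrib sum_subtractf sum_distrib_left[symmetric] S_def S2_def S3_def)
  finally show ?thesis unfolding S_def S2_def S3_def by (simp add: power3_eq_cube power2_eq_square algebra_simps)
qed

definition agr :: "nat \<Rightarrow> nat list \<Rightarrow> nat list \<Rightarrow> real" where
  "agr n x y = (\<Sum>i<n. of_bool (x!i = y!i))"

lemma p1_id: "(\<Sum>i<n. cc q i x y) = agr n x y - real n / real q"
  by (simp add: cc_def agr_def sum_subtractf)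

lemma p2_id:
  assumes "q > 0"
  shows "(\<Sum>i<n. cc q i x y ^ 2) = (1 - 2 / real q) * agr n x y + real n / real q ^ 2"
proof -
  have "\<And>i. cc q i x y ^ 2 = (1 - 2 / real q) * of_bool (x!i = y!i) + 1 / real q ^ 2"
    using assms by (simp add: cc_def power2_eq_square field_simps)
  then have "(\<Sum>i<n. cc q i x y ^ 2) = (\<Sum>i<n. (1 - 2 / real q) * of_bool (x!i = y!i) + 1 / real q ^ 2)"
    by simp
  also have "\<dots> = (1 - 2 / real q) * agr n x y + real n / real q ^ 2"
    unfolding agr_def sum.distrib sum_distrib_left[symmetric] by simp
  finally show ?thesis .
qed

lemma p3_id:
  assumes "q > 0"
  shows "(\<Sum>i<n. cc q i x y ^ 3) = ((1 - 1 / real q)^3 + 1 / real q ^ 3) * agr n x y - real n / real q ^ 3"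
proof -
  have "\<And>i. cc q i x y ^ 3 = ((1 - 1 / real q)^3 + 1 / real q ^ 3) * of_bool (x!i = y!i) - 1 / real q ^ 3"
    using assms by (simp add: cc_def power3_eq_cube field_simps)
  then have "(\<Sum>i<n. cc q i x y ^ 3) = (\<Sum>i<n. ((1 - 1 / real q)^3 + 1 / real q ^ 3) * of_bool (x!i = y!i) - 1 / real q ^ 3)"
    by simp
  also have "\<dots> = ((1 - 1 / real q)^3 + 1 / real q ^ 3) * agr n x y - real n / real q ^ 3"
    unfolding agr_def sum_subtractf sum_distrib_left[symmetric] by simp
  finally show ?thesis .
qed

definition fpoly :: "real \<Rightarrow> real \<Rightarrow> real \<Rightarrow> real" where
  "fpoly r u A = (A - r) * (A - u) * (A - u - 1)"

definition E2p :: "real \<Rightarrow> real \<Rightarrow> real \<Rightarrow> real" where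
  "E2p N Q A = (A - N/Q)^2 - ((1 - 2/Q) * A + N/Q^2)"

definition E3p :: "real \<Rightarrow> real \<Rightarrow> real \<Rightarrow> real" where
  "E3p N Q A = (A - N/Q)^3 - 3 * (A - N/Q) * ((1 - 2/Q) * A + N/Q^2)
      + 2 * (((1 - 1/Q)^3 + 1/Q^3) * A - N/Q^3)"

definition co2 :: "real \<Rightarrow> real \<Rightarrow> real \<Rightarrow> real \<Rightarrow> real" where
  "co2 N Q r u = -(r + 2*u + 1) + 3*N/Q + 3*(1 - 2/Q)"

definition co1 :: "real \<Rightarrow> real \<Rightarrow> real \<Rightarrow> real \<Rightarrow> real" where
  "co1 N Q r u = (r*(2*u+1) + u*(u+1))
     - (3*N^2/Q^2 + 3*(N/Q)*(1 - 2/Q) - 3*N/Q^2 + 2*((1 - 1/Q)^3 + 1/Q^3))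
     - co2 N Q r u * (-2*N/Q - (1 - 2/Q))"

definition co0 :: "real \<Rightarrow> real \<Rightarrow> real \<Rightarrow> real \<Rightarrow> real" where
  "co0 N Q r u = (- r*u*(u+1)) - (- (N^3/Q^3) + 3*N^2/Q^3 - 2*N/Q^3)
     - co2 N Q r u * (N^2/Q^2 - N/Q^2) + co1 N Q r u * N / Q"

lemma fpoly_expand:
  assumes "Q \<noteq> 0"
  shows "fpoly r u A = co0 N Q r u + co1 N Q r u * (A - N/Q) + co2 N Q r u * E2p N Q A + E3p N Q A"
  using assms unfolding fpoly_def co0_def co1_def co2_def E2p_def E3p_def
  by (simp add: field_simps power2_eq_square power3_eq_cube)

lemma finite_hamming: "finite (hamming_space n q)"
proof -
  have "hamming_space n q \<subseteq> {xs. set xs \<subseteq> {..<q} \<and> length xs = n}"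
    unfolding hamming_space_def by auto
  moreover have "finite {xs. set xs \<subseteq> {..<q} \<and> length xs = n}"
    by (rule finite_lists_length_eq) simp
  ultimately show ?thesis by (rule finite_subset)
qed

lemma agr_int: "agr n x y \<in> \<int>"
  unfolding agr_def by (simp)

lemma int_prod_nonneg:
  fixes A u :: real
  assumes "A \<in> \<int>" "u \<in> \<int>"
  shows "0 \<le> (A - u) * (A - u - 1)"
proof -
  have "A - u \<in> \<int>" using assms by simp
  then obtain k :: int where k: "A - u = of_int k" by (auto elim: Ints_cases)
  have "0 \<le> k * (k - 1)"
    by (cases "k \<le> 0") (auto intro: mult_nonpos_nonpos mult_nonneg_nonneg)
  then have "0 \<le> real_of_int (k * (k - 1))" by linarith
  then show ?thesis using k by simp
qed

lemma lp_main:
  fixes C :: "nat list set" and r u :: real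
  assumes q: "2 \<le> q" and Csub: "C \<subseteq> hamming_space n q"
    and dist: "\<And>x y. x \<in> C \<Longrightarrow> y \<in> C \<Longrightarrow> x \<noteq> y \<Longrightarrow> agr n x y \<le> r"
    and uint: "u \<in> \<int>"
    and c2: "0 \<le> co2 (real n) (real q) r u" and c1: "0 \<le> co1 (real n) (real q) r u"
  shows "real (card C) ^ 2 * co0 (real n) (real q) r u \<le> real (card C) * fpoly r u (real n)"
proof -
  define N where "N = real n"
  define Q where "Q = real q"
  have Q0: "Q \<noteq> 0" "q > 0" using q by (auto simp: Q_def)
  have fin: "finite C" using Csub finite_hamming finite_subset by blast
  have H: "\<And>x i. x \<in> C \<Longrightarrow> i < n \<Longrightarrow> x!i < q"
    using Csub unfolding hamming_space_def by auto
  define P1 where "P1 x y = (\<Sum>i<n. cc q i x y)" for x y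
  define E2 where "E2 x y = (\<Sum>i<n. \<Sum>k\<in>{..<n}-{i}. cc q i x y * cc q k x y)" for x y
  define E3 where "E3 x y = (\<Sum>i<n. \<Sum>k\<in>{..<n}-{i}. \<Sum>l\<in>{..<n}-{i}-{k}. cc q i x y * cc q k x y * cc q l x y)" for x y
  have pt: "fpoly r u (agr n x y) = co0 N Q r u + co1 N Q r u * P1 x y + co2 N Q r u * E2 x y + E3 x y" for x y
  proof -
    have "P1 x y = agr n x y - N/Q" unfolding P1_def N_def Q_def by (rule p1_id)
    moreover have "E2 x y = E2p N Q (agr n x y)"
      unfolding E2_def E2p_def using e2_id[of "{..<n}" "\<lambda>i. cc q i x y"]
      by (simp add: p1_id p2_id[OF Q0(2)] N_def Q_def)
    moreover have "E3 x y = E3p N Q (agr n x y)"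
      unfolding E3_def E3p_def using e3_id[of "{..<n}" "\<lambda>i. cc q i x y"]
      by (simp add: p1_id p2_id[OF Q0(2)] p3_id[OF Q0(2)] N_def Q_def)
    ultimately show ?thesis using fpoly_expand[OF Q0(1)] by simp
  qed
  have s1: "0 \<le> (\<Sum>x\<in>C. \<Sum>y\<in>C. P1 x y)" unfolding P1_def
    by (intro swap_nonneg fin finite_lessThan cc_single_psd) (auto intro: H)
  have s2: "0 \<le> (\<Sum>x\<in>C. \<Sum>y\<in>C. E2 x y)" unfolding E2_def
    by (intro swap_nonneg fin finite_lessThan finite_Diff cc_pair_psd) (auto intro: H)
  have s3: "0 \<le> (\<Sum>x\<in>C. \<Sum>y\<in>C. E3 x y)" unfolding E3_def
    by (intro swap_nonneg fin finite_lessThan finite_Diff cc_triple_psd) (auto intro: H)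
  have "(\<Sum>x\<in>C. \<Sum>y\<in>C. fpoly r u (agr n x y)) =
      (\<Sum>x\<in>C. \<Sum>y\<in>C. co0 N Q r u) + co1 N Q r u * (\<Sum>x\<in>C. \<Sum>y\<in>C. P1 x y)
      + co2 N Q r u * (\<Sum>x\<in>C. \<Sum>y\<in>C. E2 x y) + (\<Sum>x\<in>C. \<Sum>y\<in>C. E3 x y)"
    by (simp add: pt sum.distrib sum_distrib_left)
  also have "(\<Sum>x\<in>C. \<Sum>y\<in>C. co0 N Q r u) = real (card C)^2 * co0 N Q r u"
    by (simp add: power2_eq_square)
  finally have low: "real (card C)^2 * co0 N Q r u \<le> (\<Sum>x\<in>C. \<Sum>y\<in>C. fpoly r u (agr n x y))"
    using s1 s2 s3 c1 c2 unfolding N_def Q_def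
    by (smt (verit) mult_nonneg_nonneg)
  have up: "(\<Sum>y\<in>C. fpoly r u (agr n x y)) \<le> fpoly r u N" if x: "x \<in> C" for x
  proof -
    have "(\<Sum>y\<in>C. fpoly r u (agr n x y)) = fpoly r u (agr n x x) + (\<Sum>y\<in>C-{x}. fpoly r u (agr n x y))"
      using fin x by (simp add: sum.remove)
    also have "agr n x x = N" by (simp add: agr_def N_def)
    also have "(\<Sum>y\<in>C-{x}. fpoly r u (agr n x y)) \<le> 0"
    proof (rule sum_nonpos)
      fix y assume y: "y \<in> C - {x}"
      then have "agr n x y \<le> r" using dist x by auto
      moreover have "0 \<le> (agr n x y - u) * (agr n x y - u - 1)" by (rule int_prod_nonneg[OF agr_int uint])
      ultimately show "fpoly r u (agr n x y) \<le> 0" unfolding fpoly_def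
        by (simp add: mult.assoc mult_nonpos_nonneg)
    qed
    finally show ?thesis by simp
  qed
  have "(\<Sum>x\<in>C. \<Sum>y\<in>C. fpoly r u (agr n x y)) \<le> (\<Sum>x\<in>C. fpoly r u N)"
    by (rule sum_mono) (rule up)
  also have "\<dots> = real (card C) * fpoly r u N" by simp
  finally show ?thesis using low unfolding N_def Q_def by simp
qed



lemma alg_ids:
  fixes N Q J a Dv :: real
  assumes Q: "Q \<noteq> 0" and hd: "Q * Dv = Q*(N-1) - N + 2 - J"
  defines "r \<equiv> N - Dv" and "u \<equiv> N - (a + Q)/Q"
  shows "co2 N Q r u = (2*a - 2*(N-1)*(Q-1) + Q - 2 - J) / Q"
    and "co1 N Q r u = (a^2 - a*(2*N*(Q-1) + 2*J - Q) + (2 + 2*J - 2*Q - 2*Q*J - 3*N - 2*N*J + 4*N*Q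
           + 2*N*Q*J - N*Q^2 + N^2*(Q-1)^2)) / Q^2"
    and "co0 N Q r u * Q^3 = a^2 * (2 - Q - J) + ((J + Q - 1) * (2 * N * (Q - 1) - Q) + Q) * a
           - N * (N - 1) * (Q - 1) ^ 2 * (J + Q)"
proof -
  have Dv: "Dv = (Q*(N-1) - N + 2 - J) / Q" using hd Q by (simp add: field_simps)
  show "co2 N Q r u = (2*a - 2*(N-1)*(Q-1) + Q - 2 - J) / Q"
    unfolding co2_def r_def u_def Dv using Q by (simp add: field_simps)
  show "co1 N Q r u = (a^2 - a*(2*N*(Q-1) + 2*J - Q) + (2 + 2*J - 2*Q - 2*Q*J - 3*N - 2*N*J + 4*N*Q
           + 2*N*Q*J - N*Q^2 + N^2*(Q-1)^2)) / Q^2"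
    unfolding co1_def co2_def r_def u_def Dv using Q by (simp add: field_simps power2_eq_square power3_eq_cube)
  show "co0 N Q r u * Q^3 = a^2 * (2 - Q - J) + ((J + Q - 1) * (2 * N * (Q - 1) - Q) + Q) * a
           - N * (N - 1) * (Q - 1) ^ 2 * (J + Q)"
    unfolding co0_def co1_def co2_def r_def u_def Dv using Q by (simp add: field_simps power2_eq_square power3_eq_cube)
qed

lemma alg_ineqs:
  fixes N Q J e :: real
  assumes Q2: "2 \<le> Q" and NQ: "Q \<le> N" and J0: "0 \<le> J" and JJ: "J * (J + Q) < (Q - 1) * (N - 2)"
    and e0: "0 < e" and e1: "e \<le> 1"
  defines "a \<equiv> (N - 1) * (Q - 1) * (Q + J) / (Q + J - 1) + e * Q"
  shows "0 \<le> 2*a - 2*(N-1)*(Q-1) + Q - 2 - J"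
    and "0 < a^2 - a*(2*N*(Q-1) + 2*J - Q) + (2 + 2*J - 2*Q - 2*Q*J - 3*N - 2*N*J + 4*N*Q
           + 2*N*Q*J - N*Q^2 + N^2*(Q-1)^2)"
    and "0 < a^2 * (2 - Q - J) + ((J + Q - 1) * (2 * N * (Q - 1) - Q) + Q) * a
           - N * (N - 1) * (Q - 1) ^ 2 * (J + Q)"
proof -
  define w where "w = Q + J - 1"
  define P where "P = (N - 1) * (Q - 1)"
  define L where "L = P * (w + 1) / w"
  define t where "t = e * Q"
  have w1: "1 \<le> w" using Q2 J0 by (simp add: w_def)
  have wpos: "0 < w" using w1 by simp
  have Ppos: "0 < P" using Q2 NQ by (simp add: P_def)
  have aL: "a = L + t" unfolding a_def L_def t_def P_def w_def by (simp add: algebra_simps)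
  have tpos: "0 < t" and tQ: "t \<le> Q" using e0 e1 Q2 by (auto simp: t_def mult_le_cancel_right1)
  have LP: "L = P + P / w" using wpos by (simp add: L_def field_simps)
  have Pw: "0 < P / w" using Ppos wpos by simp
  have k1: "w * (J + 2 - Q) < 2 * P"
  proof -
    have "w * (J + 2 - Q) = J^2 + J - (Q - 1) * (Q - 2)" by (simp add: w_def algebra_simps power2_eq_square)
    also have "\<dots> \<le> J * (J + Q)"
    proof -
      have "J * 1 \<le> J * Q" using Q2 J0 by (intro mult_left_mono) auto
      moreover have "0 \<le> (Q - 1) * (Q - 2)" using Q2 by simp
      ultimately show ?thesis by (simp add: algebra_simps power2_eq_square)
    qed
    also have "\<dots> < (Q - 1) * (N - 2)" by (rule JJ)
    also have "\<dots> \<le> 2 * P" using Q2 NQ by (simp add: P_def algebra_simps)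
    finally show ?thesis .
  qed
  have "J + 2 - Q < 2 * (P / w)" using k1 wpos by (simp add: field_simps)
  moreover have "2*(N-1)*(Q-1) = 2*P" by (simp add: P_def)
  ultimately show "0 \<le> 2*a - 2*(N-1)*(Q-1) + Q - 2 - J"
    using aL LP tpos by linarith
  define h where "h = N*(Q-1) + J - Q/2"
  define R where "R = (Q-1)*(3*N-2) - J^2 - J*(Q-2) - Q^2/4"
  have Rpos: "0 < R"
  proof -
    have "J^2 + J*(Q-2) \<le> J*(J+Q)" using J0 by (simp add: algebra_simps power2_eq_square)
    moreover have "Q^2/4 \<le> 2*N*(Q-1)"
    proof -
      have "Q^2 \<le> N * Q" using NQ Q2 by (simp add: power2_eq_square mult_right_mono)
      also have "N * Q \<le> N * (2 * (Q - 1))" using Q2 NQ by (intro mult_left_mono) auto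
      finally have "Q^2 \<le> N * (2 * (Q - 1))" .
      moreover have "0 \<le> N*(Q-1)" using Q2 NQ by simp
      moreover have "N * (2 * (Q - 1)) = 2*(N*(Q-1))" by simp
      ultimately show ?thesis by linarith
    qed
    ultimately show ?thesis using JJ unfolding R_def by (simp add: algebra_simps)
  qed
  have "a^2 - a*(2*N*(Q-1) + 2*J - Q) + (2 + 2*J - 2*Q - 2*Q*J - 3*N - 2*N*J + 4*N*Q
           + 2*N*Q*J - N*Q^2 + N^2*(Q-1)^2) = (a - h)^2 + R"
    unfolding h_def R_def by (simp add: algebra_simps power2_eq_square)
  then show "0 < a^2 - a*(2*N*(Q-1) + 2*J - Q) + (2 + 2*J - 2*Q - 2*Q*J - 3*N - 2*N*J + 4*N*Q
           + 2*N*Q*J - N*Q^2 + N^2*(Q-1)^2)" using Rpos zero_le_power2[of "a-h"] by linarith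
  define K where "K = (Q-1)*(N-1) + Q*w - w^2"
  have Kpos: "0 < K"
  proof -
    have "w * (w - Q) = J*(J+Q) - 2*J - (Q - 1)" by (simp add: w_def algebra_simps power2_eq_square)
    then have "w * (w - Q) < (Q-1)*(N-1)" using JJ J0 Q2 by (simp add: algebra_simps)
    then show ?thesis unfolding K_def by (simp add: algebra_simps power2_eq_square)
  qed
  define D where "D = (J + Q - 1) * (2 * N * (Q - 1) - Q) + Q"
  define B where "B = (w^2*(Q-2) + Q*w + 2*P) / w"
  define den where "den = (\<lambda>x. x^2 * (2 - Q - J) + D * x - N * (N - 1) * (Q - 1) ^ 2 * (J + Q))"
  have Jw: "J = w - Q + 1" by (simp add: w_def)
  have dL: "den L = (w + 1) * P * K / w^2"
    unfolding den_def L_def K_def D_def P_def Jw using wpos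
    by (simp add: field_simps power2_eq_square)
  have dLt: "den (L + t) = den L + t * (B - (w - 1) * t)"
    unfolding den_def B_def L_def D_def P_def Jw using wpos
    by (simp add: field_simps power2_eq_square)
  have "(w-1)*t \<le> (w-1)*Q" using tQ w1 by (intro mult_left_mono) auto
  then have "w*((w-1)*t) \<le> w*((w-1)*Q)" by (rule mult_left_mono) (use wpos in auto)
  then have "w * (B - (w - 1) * t) \<ge> w * B - w * (w - 1) * Q"
    by (simp add: algebra_simps)
  also have "w * B - w * (w - 1) * Q = 2 * K"
    unfolding B_def K_def P_def using wpos by (simp add: field_simps power2_eq_square)
  finally have "0 < w * (B - (w - 1) * t)" using Kpos by simp
  then have Bt: "0 < B - (w - 1) * t" using wpos by (simp add: zero_less_mult_iff)
  have "0 < den L" unfolding dL using wpos Ppos Kpos by simp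
  moreover have "0 < t * (B - (w - 1) * t)" using tpos Bt by simp
  ultimately have "0 < den a" using dLt aL by simp
  then show "0 < a^2 * (2 - Q - J) + ((J + Q - 1) * (2 * N * (Q - 1) - Q) + Q) * a
           - N * (N - 1) * (Q - 1) ^ 2 * (J + Q)" unfolding den_def D_def by simp
qed

lemma agr_dist:
  assumes "length x = n"
  shows "agr n x y = real n - real (hamming_dist x y)"
proof -
  have "{..<n} \<inter> {i. x!i = y!i} \<union> {i. i < length x \<and> x ! i \<noteq> y ! i} = {..<n}"
    using assms by auto
  moreover have "({..<n} \<inter> {i. x!i = y!i}) \<inter> {i. i < length x \<and> x ! i \<noteq> y ! i} = {}" by auto
  moreover have "finite ({..<n} \<inter> {i. x!i = y!i})" by simp
  moreover have "finite {i. i < length x \<and> x ! i \<noteq> y ! i}" by simp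
  ultimately have "card ({..<n} \<inter> {i. x!i = y!i}) + card {i. i < length x \<and> x ! i \<noteq> y ! i} = n"
    using card_Un_disjoint[of "{..<n} \<inter> {i. x!i = y!i}" "{i. i < length x \<and> x ! i \<noteq> y ! i}"]
    by simp
  then show ?thesis unfolding agr_def hamming_dist_def by (simp add: algebra_simps flip: of_nat_add)
qed

theorem theorem2:
  fixes n q :: nat and d :: int and e :: real
  defines "S1 \<equiv> sqrt (real q ^ 2 + 4 * (real q - 1) * (real n - 2))"
  defines "j \<equiv> int q * (int n - 1 - d) - int n + 2"
  defines "s \<equiv> 1 - 2 * real_of_int d / real n"
  defines "d0 \<equiv> real n - real_of_int j * (real n - 1) / (real q * (real_of_int j + real q - 1))"
  defines "a \<equiv> (real n - 1) * (real q - 1) * (real q + real_of_int j) / (real q + real_of_int j - 1)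
               + e * real q"
  defines "D \<equiv> (real_of_int j + real q - 1) * (2 * real n * (real q - 1) - real q) + real q"
  defines "E \<equiv> - real n * (real n - 1) * (real q - 1) ^ 2 * (real_of_int j + real q)"
  assumes "2 \<le> q" and "q \<le> n"
  assumes "0 \<le> j" and "real_of_int j < (S1 - real q) / 2"
  assumes "0 < e" and "e \<le> 1" and "d0 + e \<in> \<int>"
  shows "real (A_code q n s) \<le>
         a * (a + real q) * real_of_int d * real q /
         (a ^ 2 * (2 - real q - real_of_int j) + D * a + E)"
proof -
  define N where "N = real n"
  define Q where "Q = real q"
  define J where "J = real_of_int j"
  define Dv where "Dv = real_of_int d"
  have Q2: "2 \<le> Q" and NQ: "Q \<le> N" using assms(8,9) by (auto simp: Q_def N_def)
  have J0: "0 \<le> J" using assms(10) by (simp add: J_def)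
  have JJ: "J * (J + Q) < (Q - 1) * (N - 2)"
  proof -
    have arg: "0 \<le> Q^2 + 4 * (Q - 1) * (N - 2)" using Q2 NQ by simp
    have "2 * J + Q < S1" using assms(11) by (simp add: J_def Q_def)
    moreover have "0 \<le> 2 * J + Q" using J0 Q2 by simp
    ultimately have "(2 * J + Q)^2 < S1^2" by (simp add: power_strict_mono)
    also have "S1^2 = Q^2 + 4 * (Q - 1) * (N - 2)" unfolding S1_def using arg by (simp add: Q_def N_def)
    finally show ?thesis by (simp add: algebra_simps power2_eq_square)
  qed
  have hd: "Q * Dv = Q*(N-1) - N + 2 - J"
    unfolding J_def j_def Q_def N_def Dv_def by (simp add: algebra_simps)
  note ineq = alg_ineqs[OF Q2 NQ J0 JJ assms(12,13)]
  have aa: "a = (N - 1) * (Q - 1) * (Q + J) / (Q + J - 1) + e * Q"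
    by (simp add: a_def N_def Q_def J_def)
  define m where "m = (a + Q) / Q"
  define u where "u = N - m"
  define r where "r = N - Dv"
  have Qnz: "Q \<noteq> 0" using Q2 by simp
  have wnz: "Q + J - 1 \<noteq> 0" using Q2 J0 by simp
  define w where "w = Q + J - 1"
  have wnz': "w \<noteq> 0" using wnz by (simp add: w_def)
  have d0': "d0 = N - J*(N-1)/(Q*w)" by (simp add: d0_def N_def Q_def J_def w_def algebra_simps)
  have aw: "a = (N - 1) * (Q - 1) * (Q + J) / w + e * Q" by (simp add: aa w_def)
  have Jw: "J = w - Q + 1" by (simp add: w_def)
  have "m = d0 + e"
    unfolding m_def aw d0' Jw using Qnz wnz'
    by (simp add: field_simps)
  then have mint: "m \<in> \<int>" using assms(14) by simp
  have uint: "u \<in> \<int>" unfolding u_def N_def using mint by simp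
  note ids = alg_ids[OF Qnz hd, of a]
  have c2: "0 \<le> co2 N Q r u" unfolding r_def u_def m_def ids(1)
    using ineq(1) Q2 aa by simp
  have c1: "0 \<le> co1 N Q r u" unfolding r_def u_def m_def ids(2)
    using ineq(2) Q2 aa by simp
  define den where "den = a ^ 2 * (2 - Q - J) + D * a + E"
  have den_eq: "co0 N Q r u * Q^3 = den"
    unfolding r_def u_def m_def ids(3) den_def D_def E_def by (simp add: N_def Q_def J_def)
  have denpos: "0 < den" using ineq(3) aa unfolding den_def D_def E_def by (simp add: N_def Q_def J_def)
  have c0pos: "0 < co0 N Q r u"
  proof -
    have "0 < co0 N Q r u * Q^3" using den_eq denpos by simp
    moreover have "0 < Q^3" using Q2 by simp
    ultimately show ?thesis by (simp add: zero_less_mult_iff)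
  qed
  have F: "fpoly r u N = Dv * m * (m - 1)" unfolding fpoly_def r_def u_def by (simp add: algebra_simps)
  have Dvpos: "0 < Dv"
  proof -
    have "J * 1 \<le> J * (J + Q)" using J0 Q2 by (intro mult_left_mono) auto
    moreover have "Q*Dv = N*Q + 2 - N - Q - J" using hd by (simp add: algebra_simps)
    moreover have "(Q-1)*(N-2) = N*Q - 2*Q - N + 2" by (simp add: algebra_simps)
    moreover have "J*(J+Q) = J*J + J*Q" by (simp add: algebra_simps)
    moreover have "0 \<le> J*J" by simp
    ultimately have "0 < Q * Dv" using JJ Q2 by linarith
    then show ?thesis using Q2 by (simp add: zero_less_mult_iff)
  qed
  have apos: "0 < a"
  proof -
    have "0 \<le> (N - 1) * (Q - 1) * (Q + J) / (Q + J - 1)" using Q2 NQ J0 by simp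
    moreover have "0 < e * Q" using assms(12) Q2 by simp
    ultimately show ?thesis using aa by linarith
  qed
  have m1: "1 \<le> m" unfolding m_def using apos Q2 by (simp add: field_simps)
  have Fnn: "0 \<le> fpoly r u N" unfolding F using Dvpos m1 by simp
  have bound_eq: "fpoly r u N / co0 N Q r u = a * (a + Q) * Dv * Q / den"
  proof -
    have c0e: "co0 N Q r u = den / Q^3" using den_eq Qnz by (simp add: field_simps)
    have dnz: "den \<noteq> 0" using denpos by simp
    show ?thesis unfolding F m_def c0e using Qnz dnz
      by (simp add: field_simps power3_eq_cube)
  qed
  have code_bound: "real (card C) \<le> fpoly r u N / co0 N Q r u" if C: "is_code q n s C" for C
  proof -
    have Csub: "C \<subseteq> hamming_space n q" using C by (simp add: is_code_def)
    have dist: "agr n x y \<le> r" if x: "x \<in> C" and y: "y \<in> C" and xy: "x \<noteq> y" for x y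
    proof -
      have "ham_inner n x y \<le> s" using C x y xy by (simp add: is_code_def)
      then have "1 - 2 * real (hamming_dist x y) / N \<le> 1 - 2 * Dv / N"
        by (simp add: ham_inner_def s_def N_def Dv_def)
      then have "Dv \<le> real (hamming_dist x y)" using NQ Q2 by (simp add: divide_le_cancel)
      moreover have "length x = n" using x Csub by (auto simp: hamming_space_def)
      ultimately show ?thesis using agr_dist[of x n y] by (simp add: r_def N_def)
    qed
    have main: "real (card C) ^ 2 * co0 N Q r u \<le> real (card C) * fpoly r u N"
      using lp_main[OF assms(8) Csub dist uint] c1 c2 by (simp add: N_def Q_def)
    show ?thesis
    proof (cases "card C = 0")
      case True then show ?thesis using Fnn c0pos by simp
    next
      case False
      then have "real (card C) * co0 N Q r u \<le> fpoly r u N" using main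
        by (simp add: power2_eq_square mult.assoc)
      then show ?thesis using c0pos by (simp add: field_simps)
    qed
  qed
  let ?S = "{card C | C. is_code q n s C}"
  have fin: "finite ?S"
  proof (rule finite_subset)
    show "?S \<subseteq> {..card (hamming_space n q)}"
      using finite_hamming card_mono by (auto simp: is_code_def)
  qed simp
  have ne: "?S \<noteq> {}"
  proof -
    have "is_code q n s {}" by (simp add: is_code_def)
    then show ?thesis by blast
  qed
  obtain C where C: "is_code q n s C" and cardC: "A_code q n s = card C"
    using Max_in[OF fin ne] unfolding A_code_def by auto
  have "real (A_code q n s) \<le> a * (a + Q) * Dv * Q / den"
    using code_bound[OF C] cardC bound_eq by simp
  then show ?thesis by (simp add: den_def Q_def Dv_def J_def)
qed

end
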